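(* Let $G=(V,E)$ be an $n$-vertex graph with $E = M_1\cup\dots\cup M_t$, where $M_1,\dots,M_t$ are pairwise edge-disjoint matchings each of size at least $r$. For $i\in[t]$ let $G_i=(V,M_1\cup\dots\cup M_i)$ and let $d_i = |E(G_i)\cap V^2(M_i)|/|M_i|$. Then for every $\alpha\in(0,1)$, $$\sum_{i=1}^t \frac{1}{d_i} = O\!\left(\frac{1}{\alpha^2}\cdot \mathrm{ORS}_n\big((1-\alpha)r\big)\cdot \log n\right),$$ where the constant in $O(\cdot)$ is absolute.
   Context: For a matching $M$, $V(M)$ denotes the set of vertices matched by $M$, and $E(G_i)\cap V^2(M_i)$ is the set of edges of $G_i$ with both endpoints in $V(M_i)$. A sequence $M_1,\dots,M_t$ of pairwise edge-disjoint matchings is called ordered-induced if for every $i\in[t]$, $M_i$ is an induced matching of the graph with edge set $M_1\cup\dots\cup M_i$, i.e., no edge of $M_1\cup\cdots\cup M_{i-1}$ has both endpoints in $V(M_i)$. An $n$-vertex graph is an $\mathrm{ORS}_n(r,t)$ graph if its edge set is the union of an ordered-induced sequence of $t$ matchings, each of size exactly $r$. $\mathrm{ORS}_n(r)$ denotes the maximum $t$ for which an $\mathrm{ORS}_n(r,t)$ graph exists (for non-integer $r$, $r$ is replaced by $\lceil r\rceil$). *)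

theory Defs
  imports Complex_Main
begin

definition is_matching :: "'a set set \<Rightarrow> bool" where
  "is_matching M \<longleftrightarrow> (\<forall>e\<in>M. card e = 2) \<and> (\<forall>e\<in>M. \<forall>f\<in>M. e \<noteq> f \<longrightarrow> e \<inter> f = {})"

definition matched_vertices :: "'a set set \<Rightarrow> 'a set" where
  "matched_vertices M = \<Union>M"

definition pairwise_edge_disjoint :: "(nat \<Rightarrow> 'a set set) \<Rightarrow> nat \<Rightarrow> bool" where
  "pairwise_edge_disjoint M t \<longleftrightarrow>
     (\<forall>i\<in>{1..t}. \<forall>j\<in>{1..t}. i \<noteq> j \<longrightarrow> M i \<inter> M j = {})"

definition ordered_induced :: "(nat \<Rightarrow> 'a set set) \<Rightarrow> nat \<Rightarrow> bool" where
  "ordered_induced M t \<longleftrightarrow>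
     pairwise_edge_disjoint M t \<and> (\<forall>j\<in>{1..t}. is_matching (M j)) \<and>
     (\<forall>i\<in>{1..t}. \<forall>e\<in>(\<Union>j\<in>{1..<i}. M j). \<not> e \<subseteq> matched_vertices (M i))"

definition is_ORS_graph :: "nat \<Rightarrow> nat \<Rightarrow> nat \<Rightarrow> bool" where
  "is_ORS_graph n r t \<longleftrightarrow>
     (\<exists>M :: nat \<Rightarrow> nat set set. ordered_induced M t \<and>
        (\<forall>i\<in>{1..t}. matched_vertices (M i) \<subseteq> {..<n} \<and> card (M i) = r))"

definition ORS :: "nat \<Rightarrow> nat \<Rightarrow> nat" where
  "ORS n r = Max {t. is_ORS_graph n r t}"

definition prefix_edges :: "(nat \<Rightarrow> 'a set set) \<Rightarrow> nat \<Rightarrow> 'a set set" where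
  "prefix_edges M i = (\<Union>j\<in>{1..i}. M j)"

definition density :: "(nat \<Rightarrow> 'a set set) \<Rightarrow> nat \<Rightarrow> real" where
  "density M i = real (card {e \<in> prefix_edges M i. e \<subseteq> matched_vertices (M i)}) / real (card (M i))"

end

theory Submission
  imports Defs
begin



lemma coloring:
  fixes w :: "nat \<Rightarrow> nat \<Rightarrow> real" and m :: nat
  assumes "finite I" "m > 0" "\<And>i j. w j i \<ge> 0"
  shows "\<exists>f. (\<forall>i\<in>I. f i < m) \<and>
     (\<forall>i\<in>I. real m * (\<Sum>j\<in>{j\<in>I. j < i \<and> f j = f i}. w j i) \<le> (\<Sum>j\<in>{j\<in>I. j < i}. w j i))"
  using assms(1)
proof (induction I rule: finite_linorder_max_induct)
  show "\<exists>f. (\<forall>i\<in>{}. f i < m) \<and> (\<forall>i\<in>{}. real m * (\<Sum>j\<in>{j\<in>{}. j < i \<and> f j = f i}. w j i) \<le> (\<Sum>j\<in>{j\<in>{}. j < i}. w j i))" by simp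
next
  fix b and A :: "nat set"
  assume 21: "finite A" and 22: "\<forall>a\<in>A. a < b" and IH: "\<exists>f. (\<forall>i\<in>A. f i < m) \<and>
     (\<forall>i\<in>A. real m * (\<Sum>j\<in>{j\<in>A. j < i \<and> f j = f i}. w j i) \<le> (\<Sum>j\<in>{j\<in>A. j < i}. w j i))"
  from IH obtain f where f1: "\<forall>i\<in>A. f i < m"
    and f2: "\<forall>i\<in>A. real m * (\<Sum>j\<in>{j\<in>A. j < i \<and> f j = f i}. w j i) \<le> (\<Sum>j\<in>{j\<in>A. j < i}. w j i)"
    by blast
  define g where "g c = (\<Sum>j\<in>{j\<in>A. f j = c}. w j b)" for c
  have ne: "g ` {..<m} \<noteq> {}" using assms(2) by auto
  obtain c where c: "c \<in> {..<m}" "g c = Min (g ` {..<m})"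
    using Min_in[OF _ ne] by auto
  have cmin: "g c \<le> g c'" if "c' < m" for c'
    using c that by auto
  have "real m * g c = (\<Sum>c'<m. g c)" by simp
  also have "\<dots> \<le> (\<Sum>c'<m. g c')" by (rule sum_mono) (simp add: cmin)
  also have "\<dots> = (\<Sum>j\<in>A. w j b)"
    unfolding g_def using sum.group[of A "{..<m}" f "\<lambda>j. w j b"] f1 21 by auto
  finally have gc: "real m * g c \<le> (\<Sum>j\<in>A. w j b)" .
  define f' where "f' = f(b := c)"
  have bA: "b \<notin> A" using 22 by auto
  show "\<exists>f. (\<forall>i\<in>insert b A. f i < m) \<and> (\<forall>i\<in>insert b A. real m * (\<Sum>j\<in>{j\<in>insert b A. j < i \<and> f j = f i}. w j i) \<le> (\<Sum>j\<in>{j\<in>insert b A. j < i}. w j i))"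
  proof (intro exI[of _ f'] conjI ballI)
    fix i assume "i \<in> insert b A"
    then show "f' i < m" using f1 c bA by (auto simp: f'_def)
  next
    fix i assume i: "i \<in> insert b A"
    show "real m * (\<Sum>j\<in>{j\<in>insert b A. j < i \<and> f' j = f' i}. w j i) \<le> (\<Sum>j\<in>{j\<in>insert b A. j < i}. w j i)"
    proof (cases "i = b")
      case True
      have e1: "{j\<in>insert b A. j < i \<and> f' j = f' i} = {j\<in>A. f j = c}"
        using True 22 bA by (auto simp: f'_def)
      have e2: "{j\<in>insert b A. j < i} = A" using True 22 by auto
      show ?thesis unfolding e1 e2 using gc True g_def by simp
    next
      case False
      then have iA: "i \<in> A" using i by auto
      have e1: "{j\<in>insert b A. j < i \<and> f' j = f' i} = {j\<in>A. j < i \<and> f j = f i}"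
        using False 22 iA bA by (auto simp: f'_def)
      have e2: "{j\<in>insert b A. j < i} = {j\<in>A. j < i}" using 22 iA by auto
      show ?thesis unfolding e1 e2 using f2 iA by simp
    qed
  qed
qed




lemma fin2: "card e = 2 \<Longrightarrow> finite e"
  by (metis card.infinite zero_neq_numeral)

lemma subsing: "\<forall>f\<in>A. \<forall>g\<in>A. f = g \<Longrightarrow> finite A \<and> card A \<le> 1"
proof (cases "A = {}")
  case False
  assume h: "\<forall>f\<in>A. \<forall>g\<in>A. f = g"
  then obtain x where "x \<in> A" using False by auto
  then have "A = {x}" using h by auto
  then show ?thesis by simp
qed simp

lemma matching_hit_le2:
  assumes "is_matching M" "card e = 2"
  shows "card {f\<in>M. f \<inter> e \<noteq> {}} \<le> 2"
proof -
  have fe: "finite e" using assms(2) by (rule fin2)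
  have sub: "{f\<in>M. f \<inter> e \<noteq> {}} \<subseteq> (\<Union>v\<in>e. {f\<in>M. v \<in> f})" by auto
  have one: "card {f\<in>M. v \<in> f} \<le> 1" for v
  proof -
    have "\<forall>f\<in>{f\<in>M. v \<in> f}. \<forall>g\<in>{f\<in>M. v \<in> f}. f = g"
      using assms(1) unfolding is_matching_def by blast
    then show ?thesis using subsing by blast
  qed
  have "card {f\<in>M. f \<inter> e \<noteq> {}} \<le> card (\<Union>v\<in>e. {f\<in>M. v \<in> f})"
  proof (rule card_mono[OF _ sub])
    have "finite {f\<in>M. v \<in> f}" for v
    proof -
      have "\<forall>f\<in>{f\<in>M. v \<in> f}. \<forall>g\<in>{f\<in>M. v \<in> f}. f = g"
        using assms(1) unfolding is_matching_def by blast
      then show ?thesis using subsing by blast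
    qed
    then show "finite (\<Union>v\<in>e. {f\<in>M. v \<in> f})" using fe by auto
  qed
  also have "\<dots> \<le> (\<Sum>v\<in>e. card {f\<in>M. v \<in> f})" by (rule card_UN_le[OF fe])
  also have "\<dots> \<le> (\<Sum>v\<in>e. 1)" by (rule sum_mono) (rule one)
  also have "\<dots> = 2" using assms(2) by simp
  finally show ?thesis .
qed

lemma trim:
  fixes M :: "nat \<Rightarrow> 'a set set" and S :: "nat set"
  assumes mat: "\<forall>i\<in>S. is_matching (M i) \<and> finite (M i)"
    and big: "\<forall>i\<in>S. real s \<le> real (card (M i)) - 2 * real (card {e \<in> \<Union> (M ` {j\<in>S. j<i}). e \<subseteq> \<Union> (M i)})"
  shows "\<exists>M'. \<forall>i\<in>S. M' i \<subseteq> M i \<and> card (M' i) = s \<and> (\<forall>j\<in>S. j < i \<longrightarrow> (\<forall>e\<in>M' j. \<not> e \<subseteq> \<Union> (M' i)))"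
proof -
  define F where "F i = {e \<in> \<Union> (M ` {j\<in>S. j<i}). e \<subseteq> \<Union> (M i)}" for i
  define P where "P i = {f\<in>M i. \<forall>e\<in>F i. f \<inter> e = {}}" for i
  have Pcard: "s \<le> card (P i)" if iS: "i \<in> S" for i
  proof -
    have fM: "finite (M i)" using mat iS by auto
    have fF: "finite (F i)"
    proof -
      have "F i \<subseteq> Pow (\<Union> (M i))" unfolding F_def by auto
      moreover have "finite (\<Union> (M i))"
      proof -
        have "\<forall>e\<in>M i. card e = 2" using mat iS unfolding is_matching_def by auto
        then have "\<forall>e\<in>M i. finite e" using fin2 by blast
        then show ?thesis using fM by auto
      qed
      ultimately show ?thesis by (meson finite_Pow_iff finite_subset)
    qed
    have Fe2: "card e = 2" if "e \<in> F i" for e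
      using that mat unfolding F_def is_matching_def by auto
    have "M i - P i \<subseteq> (\<Union>e\<in>F i. {f\<in>M i. f \<inter> e \<noteq> {}})" unfolding P_def by auto
    then have "card (M i - P i) \<le> card (\<Union>e\<in>F i. {f\<in>M i. f \<inter> e \<noteq> {}})"
      by (intro card_mono) (use fF fM in auto)
    also have "\<dots> \<le> (\<Sum>e\<in>F i. card {f\<in>M i. f \<inter> e \<noteq> {}})" by (rule card_UN_le[OF fF])
    also have "\<dots> \<le> (\<Sum>e\<in>F i. 2)"
      by (rule sum_mono) (use matching_hit_le2[OF _ Fe2] mat iS in blast)
    finally have "card (M i - P i) \<le> 2 * card (F i)" by simp
    moreover have "card (M i - P i) = card (M i) - card (P i)"
      by (rule card_Diff_subset) (use fM P_def in auto)
    moreover have "card (P i) \<le> card (M i)" by (rule card_mono) (use fM P_def in auto)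
    moreover have "real s \<le> real (card (M i)) - 2 * real (card (F i))" using big iS F_def by auto
    ultimately show ?thesis by linarith
  qed
  have "\<forall>i\<in>S. \<exists>T. T \<subseteq> P i \<and> card T = s"
    using Pcard by (meson obtain_subset_with_card_n)
  then obtain M' where M': "\<forall>i\<in>S. M' i \<subseteq> P i \<and> card (M' i) = s" using bchoice[of S "\<lambda>i T. T \<subseteq> P i \<and> card T = s"] by blast
  show ?thesis
  proof (rule exI[of _ M'], rule ballI)
    fix i assume iS: "i \<in> S"
    have A1: "M' i \<subseteq> M i" "card (M' i) = s" using M' iS P_def by auto
    have "\<forall>e\<in>M' j. \<not> e \<subseteq> \<Union> (M' i)" if jS: "j \<in> S" and ji: "j < i" for j
    proof (intro ballI notI)
      fix e assume eM: "e \<in> M' j" and sub: "e \<subseteq> \<Union> (M' i)"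
      have eMj: "e \<in> M j" using M' jS eM P_def by auto
      have "card e = 2" using eMj mat jS unfolding is_matching_def by auto
      then obtain v where v: "v \<in> e" by fastforce
      then obtain f where f: "f \<in> M' i" "v \<in> f" using sub by auto
      have "M' i \<subseteq> M i" using M' iS P_def by auto
      then have "\<Union> (M' i) \<subseteq> \<Union> (M i)" by auto
      then have "e \<in> F i" using eMj jS ji sub unfolding F_def by blast
      moreover have "f \<in> P i" using f M' iS by auto
      ultimately show False using f v unfolding P_def by auto
    qed
    then show "M' i \<subseteq> M i \<and> card (M' i) = s \<and> (\<forall>j\<in>S. j < i \<longrightarrow> (\<forall>e\<in>M' j. \<not> e \<subseteq> \<Union> (M' i)))"
      using A1 by blast
  qed
qed




lemma ORS_bound:
  assumes "is_ORS_graph n s t" "s \<ge> 1"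
  shows "t \<le> card (Pow (Pow {..<n::nat}))"
proof -
  obtain M :: "nat \<Rightarrow> nat set set" where M: "ordered_induced M t"
    "\<forall>i\<in>{1..t}. matched_vertices (M i) \<subseteq> {..<n} \<and> card (M i) = s"
    using assms(1) unfolding is_ORS_graph_def by blast
  have "inj_on M {1..t}"
  proof (rule inj_onI)
    fix i j assume i: "i \<in> {1..t}" and j: "j \<in> {1..t}" and e: "M i = M j"
    show "i = j"
    proof (rule ccontr)
      assume "i \<noteq> j"
      then have "M i \<inter> M j = {}" using M(1) i j
        unfolding ordered_induced_def pairwise_edge_disjoint_def by blast
      then have "M i = {}" using e by auto
      moreover have "card (M i) = s" using M(2) i by blast
      ultimately show False using assms(2) by simp
    qed
  qed
  moreover have "M ` {1..t} \<subseteq> Pow (Pow {..<n})"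
  proof
    fix X assume "X \<in> M ` {1..t}"
    then obtain i where "i \<in> {1..t}" "X = M i" by auto
    then have "\<Union>X \<subseteq> {..<n}" using M(2) unfolding matched_vertices_def by auto
    then show "X \<in> Pow (Pow {..<n})" by auto
  qed
  ultimately have "card {1..t} \<le> card (Pow (Pow {..<n}))"
    by (intro card_inj_on_le) auto
  then show ?thesis by simp
qed

lemma ORS_ge:
  assumes "is_ORS_graph n s t" "s \<ge> 1"
  shows "t \<le> ORS n s"
proof -
  have "{t. is_ORS_graph n s t} \<subseteq> {..card (Pow (Pow {..<n::nat}))}"
    using ORS_bound[OF _ assms(2)] by blast
  then have "finite {t. is_ORS_graph n s t}" using finite_subset by blast
  moreover have "t \<in> {t. is_ORS_graph n s t}" using assms(1) by simp
  ultimately show ?thesis unfolding ORS_def by (rule Max_ge)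
qed

lemma image_matching:
  assumes "is_matching M" "\<Union>M \<subseteq> V" "inj_on \<phi> V"
  shows "is_matching ((`) \<phi> ` M)"
  unfolding is_matching_def
proof (intro conjI ballI impI)
  fix e assume "e \<in> (`) \<phi> ` M"
  then obtain a where a: "a \<in> M" "e = \<phi> ` a" by auto
  have "a \<subseteq> V" using assms(2) a(1) by blast
  then have "inj_on \<phi> a" using assms(3) inj_on_subset by blast
  then have "card e = card a" using a(2) card_image by simp
  then show "card e = 2" using a(1) assms(1) unfolding is_matching_def by simp
next
  fix e f assume e: "e \<in> (`) \<phi> ` M" and f: "f \<in> (`) \<phi> ` M" and ne: "e \<noteq> f"
  then obtain a b where ab: "a \<in> M" "e = \<phi> ` a" "b \<in> M" "f = \<phi> ` b" by auto
  have "a \<noteq> b" using ab ne by auto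
  then have "a \<inter> b = {}" using ab assms(1) unfolding is_matching_def by auto
  moreover have "a \<subseteq> V" "b \<subseteq> V" using ab assms(2) by auto
  ultimately have "\<phi> ` (a \<inter> b) = \<phi> ` a \<inter> \<phi> ` b" using assms(3) inj_on_image_Int by blast
  then show "e \<inter> f = {}" using ab \<open>a \<inter> b = {}\<close> by simp
qed

lemma ors_lower:
  fixes M :: "nat \<Rightarrow> nat set set"
  assumes V: "finite V" "card V = n" and S: "finite S" and s: "s \<ge> 1"
    and mat: "\<forall>i\<in>S. is_matching (M i) \<and> \<Union>(M i) \<subseteq> V \<and> card (M i) = s"
    and dis: "\<forall>i\<in>S. \<forall>j\<in>S. i \<noteq> j \<longrightarrow> M i \<inter> M j = {}"
    and ind: "\<forall>i\<in>S. \<forall>j\<in>S. j < i \<longrightarrow> (\<forall>e\<in>M j. \<not> e \<subseteq> \<Union>(M i))"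
  shows "card S \<le> ORS n s"
proof -
  obtain \<phi> where \<phi>: "bij_betw \<phi> V {0..<card V}" using ex_bij_betw_finite_nat[OF V(1)] by (elim exE)
  have inj: "inj_on \<phi> V" using \<phi> by (rule bij_betw_imp_inj_on)
  have "\<phi> ` V = {0..<n}" using \<phi> V(2) by (simp add: bij_betw_def)
  then have im: "\<phi> ` V \<subseteq> {..<n}" by auto
  define L where "L = sorted_list_of_set S"
  define T where "T = card S"
  have lenL: "length L = T" unfolding L_def T_def by simp
  have setL: "set L = S" unfolding L_def using S by simp
  have sortL: "sorted_wrt (<) L" unfolding L_def by simp
  define h where "h k = L ! (k - 1)" for k
  have hS: "h k \<in> S" if "k \<in> {1..T}" for k
    using that lenL setL unfolding h_def by auto
  have hmono: "h k < h l" if "k \<in> {1..T}" "l \<in> {1..T}" "k < l" for k l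
    using that sorted_wrt_nth_less[OF sortL, of "k-1" "l-1"] lenL unfolding h_def by auto
  have hinj: "h k \<noteq> h l" if "k \<in> {1..T}" "l \<in> {1..T}" "k \<noteq> l" for k l
    using hmono[of k l] hmono[of l k] that by (cases "k < l") auto
  define N where "N k = (`) \<phi> ` M (h k)" for k
  have subV: "e \<subseteq> V" if "k \<in> {1..T}" "e \<in> M (h k)" for k e
    using mat hS that by blast
  have "is_ORS_graph n s T"
    unfolding is_ORS_graph_def
  proof (intro exI[of _ N] conjI ballI)
    show "ordered_induced N T"
      unfolding ordered_induced_def pairwise_edge_disjoint_def
    proof (intro conjI ballI impI)
      fix k l assume k: "k \<in> {1..T}" and l: "l \<in> {1..T}" and kl: "k \<noteq> l"
      show "N k \<inter> N l = {}"
      proof (rule ccontr)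
        assume "N k \<inter> N l \<noteq> {}"
        then obtain a b where ab: "a \<in> M (h k)" "b \<in> M (h l)" "\<phi> ` a = \<phi> ` b"
          unfolding N_def by auto
        have "a = b" using inj_on_image_eq_iff[OF inj subV[OF k ab(1)] subV[OF l ab(2)]] ab(3) by simp
        then show False using dis hS[OF k] hS[OF l] hinj[OF k l kl] ab by blast
      qed
    next
      fix k assume k: "k \<in> {1..T}"
      show "is_matching (N k)" unfolding N_def
        using image_matching[OF _ _ inj] mat hS[OF k] by blast
    next
      fix k e assume k: "k \<in> {1..T}" and e: "e \<in> (\<Union>j\<in>{1..<k}. N j)"
      then obtain l a where l: "l \<in> {1..<k}" and a: "a \<in> M (h l)" and ea: "e = \<phi> ` a"
        unfolding N_def by auto
      have l': "l \<in> {1..T}" using l k by auto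
      have mv: "matched_vertices (N k) = \<phi> ` \<Union>(M (h k))"
        unfolding matched_vertices_def N_def by auto
      show "\<not> e \<subseteq> matched_vertices (N k)"
      proof
        assume "e \<subseteq> matched_vertices (N k)"
        then have "\<phi> ` a \<subseteq> \<phi> ` \<Union>(M (h k))" using mv ea by simp
        moreover have "a \<subseteq> V" using subV[OF l' a] .
        moreover have "\<Union>(M (h k)) \<subseteq> V" using mat hS[OF k] by blast
        ultimately have "a \<subseteq> \<Union>(M (h k))"
        proof (intro subsetI)
          fix x assume 1: "\<phi> ` a \<subseteq> \<phi> ` \<Union>(M (h k))" "a \<subseteq> V" "\<Union>(M (h k)) \<subseteq> V" "x \<in> a"
          then have "\<phi> x \<in> \<phi> ` \<Union>(M (h k))" by blast
          then show "x \<in> \<Union>(M (h k))" using inj_on_image_mem_iff[OF inj] 1 by blast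
        qed
        moreover have "h l < h k" using hmono[OF l' k] l by auto
        ultimately show False using ind hS[OF k] hS[OF l'] a by blast
      qed
    qed
  next
    fix k assume k: "k \<in> {1..T}"
    have "matched_vertices (N k) \<subseteq> \<phi> ` V"
      unfolding matched_vertices_def N_def using mat hS[OF k] by blast
    then show "matched_vertices (N k) \<subseteq> {..<n}" using im by blast
    have "inj_on ((`) \<phi>) (M (h k))"
      using inj_on_subset[OF inj_on_image_Pow[OF inj]] subV[OF k] by blast
    then show "card (N k) = s" unfolding N_def using card_image mat hS[OF k] by metis
  qed
  then show ?thesis using ORS_ge s T_def by simp
qed




lemma keyprop:
  fixes d :: real assumes "1 \<le> d"
  shows "2 ^ nat \<lfloor>log 2 d\<rfloor> \<le> d \<and> d < 2 ^ (nat \<lfloor>log 2 d\<rfloor> + 1)"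
proof -
  define k where "k = \<lfloor>log 2 d\<rfloor>"
  have "log 2 d \<ge> 0" using assms by simp
  then have k0: "k \<ge> 0" unfolding k_def by simp
  have "2 powr real_of_int k \<le> d \<and> d < 2 powr real_of_int (k + 1)"
    using floor_log_eq_powr_iff[of d 2 k] assms k_def by simp
  moreover have "real_of_int k = real (nat k)" using k0 by simp
  moreover have "real_of_int (k+1) = real (nat k + 1)" using k0 by simp
  moreover have "(2::real) powr real (nat k) = 2 ^ nat k" by (rule powr_realpow) simp
  moreover have "(2::real) powr real (nat k + 1) = 2 ^ (nat k + 1)" by (rule powr_realpow) simp
  ultimately have "2 ^ nat k \<le> d \<and> d < 2 ^ (nat k + 1)" by metis
  then show ?thesis unfolding k_def .
qed

lemma keymono:
  fixes d x :: real assumes "1 \<le> d" "d \<le> x"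
  shows "nat \<lfloor>log 2 d\<rfloor> \<le> nat \<lfloor>log 2 x\<rfloor>"
proof -
  have "log 2 d \<le> log 2 x" using assms by simp
  then have "\<lfloor>log 2 d\<rfloor> \<le> \<lfloor>log 2 x\<rfloor>" by (rule floor_mono)
  then show ?thesis by simp
qed

lemma pigeon:
  fixes g :: "'a \<Rightarrow> real"
  assumes "finite T" "T \<noteq> {}"
  shows "\<exists>y\<in>T. sum g T \<le> real (card T) * g y"
proof -
  have "Max (g ` T) \<in> g ` T" using Max_in[of "g ` T"] assms by simp
  then obtain y where y: "y \<in> T" "g y = Max (g ` T)" by (metis imageE)
  have "sum g T \<le> (\<Sum>x\<in>T. g y)"
    by (rule sum_mono) (use y assms in auto)
  then show ?thesis using y by (intro bexI[of _ y]) simp_all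
qed

lemma ln2_ge: "ln (2::real) \<ge> 1/2"
proof -
  have "ln (1/2::real) \<le> 1/2 - 1" by (rule ln_le_minus_one) simp
  moreover have "ln (1/2::real) = - ln 2" by (simp add: ln_div)
  ultimately show ?thesis by simp
qed

lemma logbound:
  fixes n :: nat assumes "n \<ge> 2"
  shows "real (nat \<lfloor>log 2 (real n)\<rfloor>) + 1 \<le> 4 * ln (real n)"
proof -
  have "log 2 (real n) \<ge> log 2 2" using assms by (intro log_le_cancel_iff[THEN iffD2]) auto
  then have l1: "log 2 (real n) \<ge> 1" by simp
  then have f0: "\<lfloor>log 2 (real n)\<rfloor> \<ge> 0" by simp
  have "real (nat \<lfloor>log 2 (real n)\<rfloor>) = real_of_int \<lfloor>log 2 (real n)\<rfloor>" using f0 by simp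
  also have "\<dots> \<le> log 2 (real n)" by (rule of_int_floor_le)
  finally have "real (nat \<lfloor>log 2 (real n)\<rfloor>) \<le> log 2 (real n)" .
  then have "real (nat \<lfloor>log 2 (real n)\<rfloor>) + 1 \<le> 2 * log 2 (real n)" using l1 by linarith
  also have "\<dots> = 2 * ln (real n) / ln 2" by (simp add: log_def)
  also have "\<dots> \<le> 4 * ln (real n)"
  proof -
    have "ln (real n) \<ge> 0" using assms by simp
    moreover have "ln (2::real) > 0" by simp
    ultimately have "2 * ln (real n) / ln 2 \<le> 2 * ln (real n) / (1/2)"
      using ln2_ge by (intro divide_left_mono) auto
    then show ?thesis by simp
  qed
  finally show ?thesis .
qed




lemma main_bound:
  fixes V :: "nat set" and M :: "nat \<Rightarrow> nat set set" and \<alpha> :: real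
  assumes V: "finite V" "card V = n" and r1: "r \<ge> 1"
    and H: "\<forall>i\<in>{1..t}. is_matching (M i) \<and> matched_vertices (M i) \<subseteq> V \<and> card (M i) \<ge> r"
    and D: "pairwise_edge_disjoint M t" and a0: "0 < \<alpha>" and a1: "\<alpha> < 1"
  shows "(\<Sum>i=1..t. 1 / density M i)
         \<le> 32 * (1 / \<alpha>^2) * real (ORS n (nat \<lceil>(1 - \<alpha>) * real r\<rceil>)) * ln (real n)"
proof -
  define s where "s = nat \<lceil>(1 - \<alpha>) * real r\<rceil>"
  have "(1 - \<alpha>) * real r > 0" using a1 r1 by simp
  then have s1: "s \<ge> 1" unfolding s_def by linarith
  define Ob where "Ob = real (ORS n s)"
  define L where "L = ln (real n)"
  have L0: "L \<ge> 0" unfolding L_def by (cases "n = 0") auto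
  have O0: "Ob \<ge> 0" unfolding Ob_def by simp
  have RHS0: "0 \<le> 32 * (1 / \<alpha>^2) * Ob * L" using L0 O0 a0 by simp
  show ?thesis
  proof (cases "t = 0")
    case True
    then show ?thesis using RHS0 unfolding Ob_def L_def s_def by simp
  next
    case False
    then have t1: "1 \<in> {1..t}" by simp

    have mat: "is_matching (M i)" "\<Union>(M i) \<subseteq> V" "card (M i) \<ge> r" if "i \<in> {1..t}" for i
      using H that unfolding matched_vertices_def by auto
    have e2: "card e = 2" if "i \<in> {1..t}" "e \<in> M i" for i e
      using mat(1)[OF that(1)] that(2) unfolding is_matching_def by auto
    have finM: "finite (M i)" if "i \<in> {1..t}" for i
    proof -
      have "M i \<subseteq> Pow V" using mat(2)[OF that] by auto
      then show ?thesis using V(1) finite_subset by blast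
    qed
    have dis: "M i \<inter> M j = {}" if "i \<in> {1..t}" "j \<in> {1..t}" "i \<noteq> j" for i j
      using D that unfolding pairwise_edge_disjoint_def by blast
    have cardF: "card {e \<in> \<Union>(M ` J). e \<subseteq> X} = (\<Sum>j\<in>J. card {e\<in>M j. e \<subseteq> X})"
      if "J \<subseteq> {1..t}" for J X
    proof -
      have eq: "{e \<in> \<Union>(M ` J). e \<subseteq> X} = (\<Union>j\<in>J. {e\<in>M j. e \<subseteq> X})" by auto
      have fJ: "finite J" using that finite_subset by blast
      show ?thesis unfolding eq
      proof (rule card_UN_disjoint[OF fJ])
        show "\<forall>i\<in>J. finite {e \<in> M i. e \<subseteq> X}" using finM that by auto
        show "\<forall>i\<in>J. \<forall>j\<in>J. i \<noteq> j \<longrightarrow> {e \<in> M i. e \<subseteq> X} \<inter> {e \<in> M j. e \<subseteq> X} = {}"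
          using dis that by blast
      qed
    qed
    define c where "c i = card (M i)" for i
    define U where "U i = \<Union>(M i)" for i
    define w where "w j i = real (card {e\<in>M j. e \<subseteq> U i}) / real (c i)" for j i
    have w0: "w j i \<ge> 0" for j i unfolding w_def by simp
    have cpos: "c i > 0" if "i \<in> {1..t}" for i using mat(3)[OF that] r1 unfolding c_def by simp
    have dens: "density M i = 1 + (\<Sum>j\<in>{1..<i}. w j i)" if iT: "i \<in> {1..t}" for i
    proof -
      have pe: "prefix_edges M i = \<Union>(M ` {1..<i}) \<union> M i"
      proof -
        have "{1..i} = {1..<i} \<union> {i}" using iT by auto
        then show ?thesis unfolding prefix_edges_def by auto
      qed
      have Eeq: "{e \<in> prefix_edges M i. e \<subseteq> matched_vertices (M i)} = {e \<in> \<Union>(M ` {1..<i}). e \<subseteq> U i} \<union> M i"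
        unfolding pe U_def matched_vertices_def by auto
      have sub: "{1..<i} \<subseteq> {1..t}" using iT by auto
      have f1: "finite {e \<in> \<Union>(M ` {1..<i}). e \<subseteq> U i}"
      proof -
        have "finite (\<Union>(M ` {1..<i}))" using finM sub by auto
        then show ?thesis by simp
      qed
      have d1: "{e \<in> \<Union>(M ` {1..<i}). e \<subseteq> U i} \<inter> M i = {}"
      proof (rule ccontr)
        assume "{e \<in> \<Union>(M ` {1..<i}). e \<subseteq> U i} \<inter> M i \<noteq> {}"
        then obtain e j where ej: "j \<in> {1..<i}" "e \<in> M j" "e \<in> M i" by blast
        have "j \<in> {1..t}" "j \<noteq> i" using ej(1) sub by auto
        then have "M j \<inter> M i = {}" using dis iT by blast
        then show False using ej by blast
      qed
      have "card {e \<in> prefix_edges M i. e \<subseteq> matched_vertices (M i)} = (\<Sum>j\<in>{1..<i}. card {e\<in>M j. e \<subseteq> U i}) + c i"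
        unfolding Eeq c_def using card_Un_disjoint[OF f1 finM[OF iT] d1] cardF[OF sub] by simp
      then have "density M i = (real (\<Sum>j\<in>{1..<i}. card {e\<in>M j. e \<subseteq> U i}) + real (c i)) / real (c i)"
        unfolding density_def c_def by simp
      also have "\<dots> = 1 + (\<Sum>j\<in>{1..<i}. w j i)"
        using cpos[OF iT] unfolding w_def by (simp add: add_divide_distrib sum_divide_distrib)
      finally show ?thesis .
    qed

    define d where "d i = density M i" for i
    have d1: "d i \<ge> 1" if "i \<in> {1..t}" for i
      using dens[OF that] w0 unfolding d_def by (simp add: sum_nonneg)
    have n2: "n \<ge> 2"
    proof -
      have "card (M 1) \<ge> 1" using mat(3)[OF t1] r1 by simp
      then obtain e where e: "e \<in> M 1" by fastforce
      have "e \<subseteq> V" using e mat(2)[OF t1] by auto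
      then have "card e \<le> card V" using V(1) by (rule card_mono[rotated])
      then show ?thesis using e2[OF t1 e] V(2) by simp
    qed
    have dn: "d i \<le> real n" if iT: "i \<in> {1..t}" for i
    proof -
      let ?E = "{e \<in> prefix_edges M i. e \<subseteq> matched_vertices (M i)}"
      have "?E \<subseteq> {B. B \<subseteq> U i \<and> card B = 2}"
      proof
        fix e assume "e \<in> ?E"
        then obtain j where "j \<in> {1..i}" "e \<in> M j" "e \<subseteq> U i"
          unfolding prefix_edges_def U_def matched_vertices_def by auto
        moreover then have "j \<in> {1..t}" using iT by auto
        ultimately show "e \<in> {B. B \<subseteq> U i \<and> card B = 2}" using e2 by auto
      qed
      moreover have fU: "finite (U i)" using mat(2)[OF iT] V(1) finite_subset unfolding U_def by blast
      ultimately have "card ?E \<le> card {B. B \<subseteq> U i \<and> card B = 2}"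
        by (intro card_mono) auto
      also have "\<dots> = card (U i) choose 2" by (rule n_subsets[OF fU])
      also have "card (U i) = 2 * c i"
      proof -
        have pw: "pairwise disjnt (M i)"
          using mat(1)[OF iT] unfolding is_matching_def pairwise_def disjnt_def by blast
        have "card (U i) = sum card (M i)" unfolding U_def
          by (rule card_Union_disjoint[OF pw]) (use e2[OF iT] fin2 in blast)
        also have "\<dots> = (\<Sum>e\<in>M i. 2)" by (rule sum.cong) (use e2[OF iT] in auto)
        finally show ?thesis unfolding c_def by simp
      qed
      finally have cE: "card ?E \<le> (2 * c i) choose 2" .
      have "(2 * c i) choose 2 = c i * (2 * c i - 1)" by (simp add: choose_two)
      moreover have "card (U i) \<le> n" using card_mono[OF V(1) mat(2)[OF iT]] V(2) U_def by simp
      ultimately have "card ?E \<le> c i * n" using cE \<open>card (U i) = 2 * c i\<close>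
        by (metis diff_le_self le_trans mult_le_mono2)
      then have "real (card ?E) \<le> real (c i) * real n" by (metis of_nat_le_iff of_nat_mult)
      then have "real (card ?E) / real (c i) \<le> real n"
        using cpos[OF iT] by (simp add: divide_le_eq mult.commute)
      then show ?thesis unfolding d_def density_def c_def .
    qed
    define key where "key i = nat \<lfloor>log 2 (d i)\<rfloor>" for i
    define K where "K = nat \<lfloor>log 2 (real n)\<rfloor>"
    have keyK: "key i \<in> {..K}" if "i \<in> {1..t}" for i
      using keymono[OF d1[OF that] dn[OF that]] unfolding key_def K_def by simp
    define g where "g k = (\<Sum>i\<in>{i\<in>{1..t}. key i = k}. 1 / d i)" for k
    have Sg: "(\<Sum>i=1..t. 1 / density M i) = (\<Sum>k\<in>{..K}. g k)"
    proof -
      have "key ` {1..t} \<subseteq> {..K}" using keyK by blast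
      then have "(\<Sum>k\<in>{..K}. g k) = (\<Sum>i\<in>{1..t}. 1 / d i)"
        unfolding g_def by (intro sum.group) auto
      then show ?thesis unfolding d_def by simp
    qed
    obtain k where kK: "k \<in> {..K}" and Sk: "(\<Sum>k\<in>{..K}. g k) \<le> real (card {..K}) * g k"
      using pigeon[of "{..K}" g] by auto
    have SK: "(\<Sum>i=1..t. 1 / density M i) \<le> (real K + 1) * g k" using Sg Sk by (simp add: add.commute)

    define B where "B = {i\<in>{1..t}. key i = k}"
    have Bsub: "B \<subseteq> {1..t}" unfolding B_def by auto
    have fB: "finite B" using Bsub finite_subset by blast
    have dB: "2 ^ k \<le> d i \<and> d i < 2 ^ (k + 1)" if "i \<in> B" for i
      using keyprop[OF d1] that unfolding B_def key_def by auto
    have gB: "g k \<le> real (card B) / 2 ^ k"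
    proof -
      have "g k = (\<Sum>i\<in>B. 1 / d i)" unfolding g_def B_def ..
      also have "\<dots> \<le> (\<Sum>i\<in>B. 1 / 2 ^ k)"
      proof (rule sum_mono)
        fix i assume "i \<in> B"
        then have "2 ^ k \<le> d i" using dB by blast
        then show "1 / d i \<le> 1 / 2 ^ k" by (simp add: frac_le)
      qed
      finally show ?thesis by simp
    qed
    define m where "m = nat \<lceil>2 ^ (k + 2) / \<alpha>\<rceil>"
    have x1: "2 ^ (k + 2) / \<alpha> \<ge> 1"
    proof -
      have "(1::real) \<le> 2 ^ (k + 2)" by (rule one_le_power) simp
      also have "\<dots> \<le> 2 ^ (k + 2) / \<alpha>" using a0 a1 by (simp add: le_divide_eq)
      finally show ?thesis .
    qed
    have mge: "real m \<ge> 2 ^ (k + 2) / \<alpha>" unfolding m_def by linarith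
    have mle: "real m \<le> 2 ^ (k + 3) / \<alpha>"
    proof -
      have "real m \<le> 2 ^ (k + 2) / \<alpha> + 1" unfolding m_def using x1 by linarith
      also have "\<dots> \<le> 2 * (2 ^ (k + 2) / \<alpha>)" using x1 by linarith
      also have "\<dots> = 2 ^ (k + 3) / \<alpha>" by (simp add: power_add)
      finally show ?thesis .
    qed
    have m0: "m > 0" using mge x1 by linarith
    obtain f where f1: "\<forall>i\<in>B. f i < m"
      and f2: "\<forall>i\<in>B. real m * (\<Sum>j\<in>{j\<in>B. j < i \<and> f j = f i}. w j i) \<le> (\<Sum>j\<in>{j\<in>B. j < i}. w j i)"
      using coloring[of B m w, OF fB m0 w0] by blast
    have wB: "(\<Sum>j\<in>{j\<in>B. j < i}. w j i) < 2 ^ (k + 1)" if iB: "i \<in> B" for i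
    proof -
      have iT: "i \<in> {1..t}" using iB Bsub by auto
      have "(\<Sum>j\<in>{j\<in>B. j < i}. w j i) \<le> (\<Sum>j\<in>{1..<i}. w j i)"
        by (rule sum_mono2) (use Bsub w0 in auto)
      also have "\<dots> = d i - 1" using dens[OF iT] unfolding d_def by simp
      finally show ?thesis using dB[OF iB] by linarith
    qed
    define Cl where "Cl c = {i\<in>B. f i = c}" for c
    have "real (card B) = (\<Sum>i\<in>B. (1::real))" by simp
    also have "\<dots> = (\<Sum>c\<in>{..<m}. (\<Sum>i\<in>Cl c. (1::real)))"
      unfolding Cl_def by (rule sum.group[symmetric]) (use fB f1 in auto)
    also have "\<dots> = (\<Sum>c\<in>{..<m}. real (card (Cl c)))" by simp
    finally have cB: "real (card B) = (\<Sum>c\<in>{..<m}. real (card (Cl c)))" .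
    obtain c0 where cm: "c0 \<in> {..<m}" and cc: "(\<Sum>c\<in>{..<m}. real (card (Cl c))) \<le> real (card {..<m}) * real (card (Cl c0))"
      using pigeon[of "{..<m}" "\<lambda>c. real (card (Cl c))"] m0 by auto
    have cB2: "real (card B) \<le> real m * real (card (Cl c0))" using cB cc by simp
    define S' where "S' = Cl c0"
    have S'sub: "S' \<subseteq> B" unfolding S'_def Cl_def by auto
    have S'T: "S' \<subseteq> {1..t}" using S'sub Bsub by auto
    have fS': "finite S'" using S'sub fB finite_subset by blast
    have Wsmall: "(\<Sum>j\<in>{j\<in>S'. j < i}. w j i) \<le> \<alpha> / 2" if iS: "i \<in> S'" for i
    proof -
      have iB: "i \<in> B" using iS S'sub by auto
      have eq: "{j\<in>B. j < i \<and> f j = f i} = {j\<in>S'. j < i}" using iS unfolding S'_def Cl_def by auto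
      define W where "W = (\<Sum>j\<in>{j\<in>S'. j < i}. w j i)"
      have W0: "W \<ge> 0" unfolding W_def by (rule sum_nonneg) (use w0 in auto)
      have "real m * W < 2 ^ (k + 1)" using f2 iB eq wB[OF iB] unfolding W_def by fastforce
      moreover have "(2 ^ (k + 2) / \<alpha>) * W \<le> real m * W" using mge W0 by (rule mult_right_mono)
      ultimately have "(2 ^ (k + 2) / \<alpha>) * W < 2 ^ (k + 1)" by linarith
      then have "2 * (2 ^ (k + 1)) * W < 2 ^ (k + 1) * \<alpha>" using a0 by (simp add: field_simps)
      then have "2 ^ (k + 1) * (2 * W) < 2 ^ (k + 1) * \<alpha>" by (simp add: algebra_simps)
      then have "2 * W < \<alpha>" by (rule mult_less_cancel_left_pos[THEN iffD1, rotated]) simp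
      then show ?thesis unfolding W_def by simp
    qed

    have big: "\<forall>i\<in>S'. real s \<le> real (card (M i)) - 2 * real (card {e \<in> \<Union> (M ` {j\<in>S'. j<i}). e \<subseteq> \<Union> (M i)})"
    proof
      fix i assume iS: "i \<in> S'"
      have iT: "i \<in> {1..t}" using iS S'T by auto
      have Jsub: "{j\<in>S'. j<i} \<subseteq> {1..t}" using S'T by auto
      define F where "F = card {e \<in> \<Union> (M ` {j\<in>S'. j<i}). e \<subseteq> \<Union> (M i)}"
      have "F = (\<Sum>j\<in>{j\<in>S'. j<i}. card {e\<in>M j. e \<subseteq> U i})"
        unfolding F_def U_def by (rule cardF[OF Jsub])
      then have "real F = (\<Sum>j\<in>{j\<in>S'. j<i}. real (card {e\<in>M j. e \<subseteq> U i}))" by simp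
      also have "\<dots> = real (c i) * (\<Sum>j\<in>{j\<in>S'. j<i}. w j i)"
        using cpos[OF iT] unfolding w_def by (simp add: sum_distrib_left)
      also have "\<dots> \<le> real (c i) * (\<alpha> / 2)"
        by (rule mult_left_mono) (use Wsmall[OF iS] in auto)
      finally have F2: "2 * real F \<le> \<alpha> * real (c i)" by (simp add: mult.commute)
      have "(1 - \<alpha>) * real r \<le> (1 - \<alpha>) * real (c i)"
        using mat(3)[OF iT] a1 unfolding c_def by (intro mult_left_mono) auto
      also have "\<dots> \<le> real (c i) - 2 * real F" using F2 by (simp add: algebra_simps)
      finally have X: "(1 - \<alpha>) * real r \<le> real_of_int (int (c i) - 2 * int F)" by simp
      have "\<lceil>(1 - \<alpha>) * real r\<rceil> \<le> int (c i) - 2 * int F"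
        using X by (simp add: ceiling_le_iff)
      moreover have "real s = real_of_int \<lceil>(1 - \<alpha>) * real r\<rceil>"
        unfolding s_def using \<open>(1 - \<alpha>) * real r > 0\<close> by simp
      ultimately have "real s \<le> real (c i) - 2 * real F"
        by (metis of_int_diff of_int_le_iff of_int_mult of_int_numeral of_int_of_nat_eq)
      then show "real s \<le> real (card (M i)) - 2 * real (card {e \<in> \<Union> (M ` {j\<in>S'. j<i}). e \<subseteq> \<Union> (M i)})"
        unfolding F_def c_def .
    qed
    obtain M' where M': "\<forall>i\<in>S'. M' i \<subseteq> M i \<and> card (M' i) = s \<and> (\<forall>j\<in>S'. j < i \<longrightarrow> (\<forall>e\<in>M' j. \<not> e \<subseteq> \<Union> (M' i)))"
      using trim[of S' M s] big mat(1) finM S'T by blast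
    have cS': "card S' \<le> ORS n s"
    proof (rule ors_lower[OF V fS' s1])
      show "\<forall>i\<in>S'. is_matching (M' i) \<and> \<Union>(M' i) \<subseteq> V \<and> card (M' i) = s"
      proof
        fix i assume iS: "i \<in> S'"
        have iT: "i \<in> {1..t}" using iS S'T by auto
        have sub: "M' i \<subseteq> M i" using M' iS by blast
        have "is_matching (M' i)" using mat(1)[OF iT] sub unfolding is_matching_def by blast
        moreover have "\<Union>(M' i) \<subseteq> V" using mat(2)[OF iT] sub by blast
        ultimately show "is_matching (M' i) \<and> \<Union>(M' i) \<subseteq> V \<and> card (M' i) = s" using M' iS by blast
      qed
      show "\<forall>i\<in>S'. \<forall>j\<in>S'. i \<noteq> j \<longrightarrow> M' i \<inter> M' j = {}"
      proof (intro ballI impI)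
        fix i j assume "i \<in> S'" "j \<in> S'" "i \<noteq> j"
        moreover then have "M i \<inter> M j = {}" using dis S'T by blast
        ultimately show "M' i \<inter> M' j = {}" using M' by blast
      qed
      show "\<forall>i\<in>S'. \<forall>j\<in>S'. j < i \<longrightarrow> (\<forall>e\<in>M' j. \<not> e \<subseteq> \<Union>(M' i))" using M' by blast
    qed
    have h2: "g k \<le> 8 * Ob / \<alpha>"
    proof -
      have "real (card B) \<le> real m * real (card S')" using cB2 unfolding S'_def .
      also have "\<dots> \<le> real m * Ob" unfolding Ob_def using cS' by (intro mult_left_mono) auto
      also have "\<dots> \<le> (2 ^ (k + 3) / \<alpha>) * Ob" using mle O0 by (rule mult_right_mono)
      finally have "real (card B) / 2 ^ k \<le> (2 ^ (k + 3) / \<alpha>) * Ob / 2 ^ k"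
        by (rule divide_right_mono) simp
      also have "\<dots> = 8 * Ob / \<alpha>" by (simp add: power_add)
      finally show ?thesis using gB by linarith
    qed
    have h4: "real K + 1 \<le> 4 * L" unfolding K_def L_def by (rule logbound[OF n2])
    have "(\<Sum>i=1..t. 1 / density M i) \<le> (real K + 1) * (8 * Ob / \<alpha>)"
      using SK h2 by (smt (verit) mult_left_mono of_nat_0_le_iff)
    also have "\<dots> \<le> (4 * L) * (8 * Ob / \<alpha>)"
      using h4 O0 a0 by (intro mult_right_mono) auto
    also have "\<dots> = 32 * (1 / \<alpha>) * Ob * L" by simp
    also have "\<dots> \<le> 32 * (1 / \<alpha>^2) * Ob * L"
    proof -
      have "1 / \<alpha> \<le> 1 / \<alpha>^2"
        using a0 a1 by (simp add: divide_simps power2_eq_square)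
      then show ?thesis using O0 L0 by (intro mult_right_mono) auto
    qed
    finally show ?thesis unfolding Ob_def L_def s_def .
  qed
qed


theorem lemma4p5:
  "\<exists>C::real. \<forall>(V::nat set) (n::nat) (t::nat) (r::nat) (M::nat \<Rightarrow> nat set set) (\<alpha>::real).
     finite V \<and> card V = n \<and> r \<ge> 1 \<and>
     (\<forall>i\<in>{1..t}. is_matching (M i) \<and> matched_vertices (M i) \<subseteq> V \<and> card (M i) \<ge> r) \<and>
     pairwise_edge_disjoint M t \<and> 0 < \<alpha> \<and> \<alpha> < 1
     \<longrightarrow> (\<Sum>i=1..t. 1 / density M i)
         \<le> C * (1 / \<alpha>^2) * real (ORS n (nat \<lceil>(1 - \<alpha>) * real r\<rceil>)) * ln (real n)"
  by (rule exI[of _ 32]) (blast intro: main_bound)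

end
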